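(* Let $n\ge m$ and let $\ell,N,p,q\in\mathbb{N}$. Let $\mathcal{S}=\{x\in\mathbb{R}^n : Fx\le\mathbf{1}_p\}$ be a C-polytope with $F\in\mathbb{R}^{p\times n}$ of full column rank and vertices $x_1,\dots,x_N$, and let $\mathscr{U}=\{u\in\mathbb{R}^m: Hu\le\mathbf{1}_q\}$ be a C-polytope with $H\in\mathbb{R}^{q\times m}$ of full column rank. Let $\delta\in\mathbb{R}^\ell$ be given, with associated matrices $A(\delta)\in\mathbb{R}^{n\times n}$, $B(\delta)\in\mathbb{R}^{n\times m}$. Set $G=\begin{bmatrix}H\\ FB(\delta)\end{bmatrix}\in\mathbb{R}^{(q+p)\times m}$ and, for each vertex $x_i$, $l^{(i)}=\begin{bmatrix}\mathbf{1}_q\\ \mathbf{1}_p-FA(\delta)x_i\end{bmatrix}\in\mathbb{R}^{q+p}$. Then the set $$\mathcal{L}_\delta=\{(C_1,\dots,C_N,d_1,\dots,d_N): C_i\in\mathbb{R}^{m\times\ell},\ d_i\in\mathbb{R}^m,\ C_i\delta+d_i\in\mathscr{U},\ A(\delta)x_i+B(\delta)(C_i\delta+d_i)\in\mathcal{S}\ \forall i\}$$ is nonempty if and only if, for every $i\in\{1,\dots,N\}$, there exist index sets $\mathcal{Q}\subset\{1,\dots,q\}$ and $\mathcal{P}\subset\{1,\dots,p\}$ such that the submatrix $G_{\mathcal{Q}\cup\mathcal{P}}\in\mathbb{R}^{m\times m}$ formed by rows $\mathcal{Q}$ of $H$ and rows $\mathcal{P}$ of $FB(\delta)$ is invertible and,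 with $l^{(i)}_{\mathcal{Q}\cup\mathcal{P}}$ the corresponding subvector of $l^{(i)}$, $$(H)_k\,G_{\mathcal{Q}\cup\mathcal{P}}^{-1}\,l^{(i)}_{\mathcal{Q}\cup\mathcal{P}}\le 1\quad\forall k\in\{1,\dots,q\}\setminus\mathcal{Q},$$ $$(FB(\delta))_k\,G_{\mathcal{Q}\cup\mathcal{P}}^{-1}\,l^{(i)}_{\mathcal{Q}\cup\mathcal{P}}\le 1-(FA(\delta)x_i)_k\quad\forall k\in\{1,\dots,p\}\setminus\mathcal{P}.$$
   Context: A C-polytope is a convex bounded polyhedron containing the origin in its interior. $(P)_k$ denotes the $k$-th row of a matrix $P$; for an index set $\mathcal{I}$, $P_{\mathcal{I}}$ (resp. $y_{\mathcal{I}}$) denotes the submatrix (subvector) of rows (entries) with indices in $\mathcal{I}$. $\mathbf{1}_p$ is the all-ones vector in $\mathbb{R}^p$. *)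

theory Defs
  imports "Jordan_Normal_Form.Gauss_Jordan_Elimination" "Jordan_Normal_Form.DL_Rank"
          "Jordan_Normal_Form.DL_Submatrix"
begin

definition ones_vec :: "nat \<Rightarrow> real vec" where
  "ones_vec k = vec k (\<lambda>_. 1)"

definition unit_polyhedron :: "nat \<Rightarrow> real mat \<Rightarrow> real vec set" where
  "unit_polyhedron n P = {x \<in> carrier_vec n. P *\<^sub>v x \<le> ones_vec (dim_row P)}"

definition C_polytope :: "nat \<Rightarrow> real vec set \<Rightarrow> bool" where
  "C_polytope n S \<longleftrightarrow> S \<subseteq> carrier_vec n
     \<and> (\<forall>x\<in>S. \<forall>y\<in>S. \<forall>t::real. 0 \<le> t \<and> t \<le> 1 \<longrightarrow> t \<cdot>\<^sub>v x + (1 - t) \<cdot>\<^sub>v y \<in> S)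
     \<and> (\<exists>M. \<forall>x\<in>S. \<forall>j<n. \<bar>x $ j\<bar> \<le> M)
     \<and> (\<exists>P b. P \<in> carrier_mat (dim_vec b) n \<and> S = {x \<in> carrier_vec n. P *\<^sub>v x \<le> b})
     \<and> (\<exists>e>0. \<forall>x\<in>carrier_vec n. (\<forall>j<n. \<bar>x $ j\<bar> < e) \<longrightarrow> x \<in> S)"

definition is_vertex :: "real vec set \<Rightarrow> real vec \<Rightarrow> bool" where
  "is_vertex S v \<longleftrightarrow> v \<in> S \<and> \<not> (\<exists>y\<in>S. \<exists>z\<in>S. y \<noteq> z \<and> (\<exists>t::real. 0 < t \<and> t < 1 \<and> v = t \<cdot>\<^sub>v y + (1 - t) \<cdot>\<^sub>v z))"

text \<open>Subvector with entries indexed by J (in increasing order), matching submatrix rows.\<close>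
definition subvec :: "'a vec \<Rightarrow> nat set \<Rightarrow> 'a vec" where
  "subvec v J = vec (card {i. i < dim_vec v \<and> i \<in> J}) (\<lambda>i. v $ pick J i)"

end

theory Submission
  imports Defs
begin

lemma pick_lessThan: "b < m \<Longrightarrow> pick {..<m} b = b"
proof -
  assume "b < m"
  have "card {a\<in>{..<m}. a < b} = b"
  proof -
    have "{a\<in>{..<m}. a < b} = {..<b}" using \<open>b<m\<close> by auto
    thus ?thesis by simp
  qed
  thus ?thesis using pick_card_in_set[of b "{..<m}"] \<open>b<m\<close> by simp
qed

lemma card_less_in: "finite (J::nat set) \<Longrightarrow> j \<in> J \<Longrightarrow> card {a\<in>J. a < j} < card J"
proof -
  assume "finite J" "j \<in> J"
  have "j \<notin> {a\<in>J. a < j}" by auto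
  hence "{a\<in>J. a < j} \<subset> J" using \<open>j \<in> J\<close> by blast
  thus ?thesis using \<open>finite J\<close> by (rule psubset_card_mono[rotated])
qed

lemma bij_pick: "finite J \<Longrightarrow> bij_betw (pick J) {..<card J} J"
proof -
  assume fin: "finite J"
  have "inj_on (pick J) {..<card J}"
    by (rule inj_onI, metis lessThan_iff nat_neq_iff pick_mono less_irrefl)
  moreover have "pick J ` {..<card J} = J"
  proof
    show "pick J ` {..<card J} \<subseteq> J" using pick_in_set by auto
    show "J \<subseteq> pick J ` {..<card J}"
    proof
      fix j assume "j \<in> J"
      then have "pick J (card {a\<in>J. a < j}) = j" by (rule pick_card_in_set)
      moreover have "card {a\<in>J. a < j} < card J" using card_less_in fin \<open>j\<in>J\<close> by blast
      ultimately show "j \<in> pick J ` {..<card J}" by force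
    qed
  qed
  ultimately show ?thesis unfolding bij_betw_def by blast
qed

lemma submatrix_carrier:
  assumes "G \<in> carrier_mat M m" "J \<subseteq> {..<M}"
  shows "submatrix G J {..<m} \<in> carrier_mat (card J) m"
proof -
  have "{i. i < M \<and> i \<in> J} = J" using assms(2) by auto
  moreover have "{i. i < m \<and> i \<in> {..<m}} = {..<m}" by auto
  ultimately show ?thesis using assms(1) unfolding carrier_mat_def by (auto simp: dim_submatrix)
qed

lemma submatrix_entry:
  assumes "G \<in> carrier_mat M m" "J \<subseteq> {..<M}" "a < card J" "b < m"
  shows "submatrix G J {..<m} $$ (a,b) = G $$ (pick J a, b)"
proof -
  have e1: "{i. i < dim_row G \<and> i \<in> J} = J" using assms(1,2) by auto
  have e2: "{i. i < dim_col G \<and> i \<in> {..<m}} = {..<m}" using assms(1) by auto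
  show ?thesis using submatrix_index[of a G J b "{..<m}"] assms e1 e2 pick_lessThan by simp
qed

lemma row_dot:
  assumes "G \<in> carrier_mat M m" "d \<in> carrier_vec m"
  shows "row G j \<bullet> d = (\<Sum>i<m. G $$ (j,i) * d $ i)"
  using assms unfolding scalar_prod_def row_def by (auto simp: lessThan_atLeast0)

lemma kernel_exists:
  fixes G :: "real mat"
  assumes G: "G \<in> carrier_mat M m" and J: "J \<subseteq> {..<M}" and lt: "card J < m"
  shows "\<exists>d\<in>carrier_vec m. d \<noteq> 0\<^sub>v m \<and> (\<forall>j\<in>J. row G j \<bullet> d = 0)"
proof -
  let ?r = "card J"
  have finJ: "finite J" using J finite_subset by blast
  define f where "f = (\<lambda>a. if a < ?r then row G (pick J a) else 0\<^sub>v m)"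
  have fc: "f \<in> {0..<m} \<rightarrow> carrier_vec m" using G by (auto simp: f_def)
  have "(\<lambda>a. if a = m - 1 then 0\<^sub>v m else f a) = f" unfolding f_def using lt by (auto intro!: ext)
  hence det0: "det (mat\<^sub>r m m f) = 0" using det_row_0[of "m-1" m f] fc lt by simp
  obtain v where v: "v \<in> carrier_vec m" "v \<noteq> 0\<^sub>v m" "mat\<^sub>r m m f *\<^sub>v v = 0\<^sub>v m"
    using det_0_iff_vec_prod_zero_field[OF mat_row_carrierI] det0 by blast
  show ?thesis
  proof (intro bexI conjI ballI)
    fix j assume "j\<in>J"
    define a where "a = card {x\<in>J. x<j}"
    have a: "a < ?r" "pick J a = j" using card_less_in[OF finJ \<open>j\<in>J\<close>] pick_card_in_set[OF \<open>j\<in>J\<close>]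
      by (auto simp: a_def)
    have am: "a < m" using a lt by simp
    have fa: "f a \<in> carrier_vec m" using fc am by auto
    have rf: "row (mat\<^sub>r m m f) a = f a" using am fa by (intro row_mat_of_row_fun) auto
    have "0 = (mat\<^sub>r m m f *\<^sub>v v) $ a" using v(3) am by simp
    also have "\<dots> = row (mat\<^sub>r m m f) a \<bullet> v" using am by simp
    also have "\<dots> = f a \<bullet> v" using rf by simp
    also have "f a = row G j" using a by (simp add: f_def)
    finally show "row G j \<bullet> v = 0" by simp
  qed (use v in auto)
qed

definition rindep :: "real mat \<Rightarrow> nat \<Rightarrow> nat set \<Rightarrow> bool" where
  "rindep G m J \<longleftrightarrow> (\<forall>c. (\<forall>i<m. (\<Sum>j\<in>J. c j * G $$ (j,i)) = 0) \<longrightarrow> (\<forall>j\<in>J. c j = 0))"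

lemma feas_iff:
  assumes G: "G \<in> carrier_mat M m" and b: "b \<in> carrier_vec M"
  shows "G *\<^sub>v w \<le> b \<longleftrightarrow> (\<forall>k<M. row G k \<bullet> w \<le> b $ k)"
  using G b unfolding less_eq_vec_def by auto

lemma step:
  assumes G: "G \<in> carrier_mat M m" and inj: "\<forall>v\<in>carrier_vec m. G *\<^sub>v v = 0\<^sub>v M \<longrightarrow> v = 0\<^sub>v m"
    and b: "b \<in> carrier_vec M" and J: "J \<subseteq> {..<M}" "card J < m" "rindep G m J"
    and w: "w \<in> carrier_vec m" "G *\<^sub>v w \<le> b" "\<forall>j\<in>J. row G j \<bullet> w = b $ j"
  shows "\<exists>J' w'. J' \<subseteq> {..<M} \<and> card J' = Suc (card J) \<and> rindep G m J' \<and> w' \<in> carrier_vec m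
     \<and> G *\<^sub>v w' \<le> b \<and> (\<forall>j\<in>J'. row G j \<bullet> w' = b $ j)"
proof -
  have finJ: "finite J" using J finite_subset by blast
  have feas: "\<forall>k<M. row G k \<bullet> w \<le> b$k" using feas_iff[OF G b] w(2) by blast
  have rc: "\<And>k. row G k \<in> carrier_vec m" using G by auto
  obtain d where d: "d\<in>carrier_vec m" "d \<noteq> 0\<^sub>v m" "\<forall>j\<in>J. row G j \<bullet> d = 0"
    using kernel_exists[OF G J(1,2)] by blast
  have "G *\<^sub>v d \<noteq> 0\<^sub>v M" using inj d by auto
  then obtain k where k: "k < M" "row G k \<bullet> d \<noteq> 0"
  proof -
    assume a: "\<And>k. k < M \<Longrightarrow> row G k \<bullet> d \<noteq> 0 \<Longrightarrow> thesis"
    show thesis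
    proof (rule ccontr)
      assume "\<not> thesis"
      hence "\<forall>k<M. row G k \<bullet> d = 0" using a by blast
      hence "G *\<^sub>v d = 0\<^sub>v M" using G by (intro eq_vecI) auto
      thus False using \<open>G *\<^sub>v d \<noteq> 0\<^sub>v M\<close> by simp
    qed
  qed
  define s :: real where "s = (if row G k \<bullet> d > 0 then 1 else -1)"
  define e where "e = s \<cdot>\<^sub>v d"
  have ec: "e \<in> carrier_vec m" using d by (simp add: e_def)
  have edot: "\<And>j. row G j \<bullet> e = s * (row G j \<bullet> d)" unfolding e_def
    using rc d G by (intro scalar_prod_smult_right) auto
  have ek: "row G k \<bullet> e > 0" using k(2) by (auto simp: edot s_def)
  have eJ: "\<forall>j\<in>J. row G j \<bullet> e = 0" using d(3) edot by simp
  define K where "K = {k. k < M \<and> row G k \<bullet> e > 0}"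
  define ratio where "ratio k = (b$k - row G k \<bullet> w) / (row G k \<bullet> e)" for k
  have Kfin: "finite K" "K \<noteq> {}" using k ek by (auto simp: K_def)
  define t where "t = Min (ratio ` K)"
  have "t \<in> ratio ` K" unfolding t_def using Kfin by (intro Min_in) auto
  then obtain k0 where k0: "k0 \<in> K" "t = ratio k0" by auto
  have tle: "\<forall>k\<in>K. t \<le> ratio k" using Kfin unfolding t_def by auto
  have t0: "t \<ge> 0" using k0 feas unfolding ratio_def K_def by auto
  define w' where "w' = w + t \<cdot>\<^sub>v e"
  have w'c: "w' \<in> carrier_vec m" using w ec by (simp add: w'_def)
  have dot: "\<And>k. row G k \<bullet> w' = row G k \<bullet> w + t * (row G k \<bullet> e)"
    unfolding w'_def using rc w ec G by (subst scalar_prod_add_distrib[of _ m]) auto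
  have k0J: "k0 \<notin> J" using k0(1) eJ by (auto simp: K_def)
  have k0pos: "row G k0 \<bullet> e > 0" "k0 < M" using k0(1) by (auto simp: K_def)
  show ?thesis
  proof (intro exI conjI)
    show "insert k0 J \<subseteq> {..<M}" using J k0pos by auto
    show "card (insert k0 J) = Suc (card J)" using finJ k0J by simp
    show "w' \<in> carrier_vec m" by (rule w'c)
    show "rindep G m (insert k0 J)"
      unfolding rindep_def
    proof (intro allI impI)
      fix c assume hc: "\<forall>i<m. (\<Sum>j\<in>insert k0 J. c j * G $$ (j,i)) = 0"
      have "(\<Sum>j\<in>insert k0 J. c j * (row G j \<bullet> e)) = (\<Sum>j\<in>insert k0 J. \<Sum>i<m. c j * G $$ (j,i) * e $ i)"
        using row_dot[OF G ec] by (simp add: sum_distrib_left mult.assoc)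
      also have "\<dots> = (\<Sum>i<m. (\<Sum>j\<in>insert k0 J. c j * G $$ (j,i)) * e $ i)"
        by (subst sum.swap) (simp add: sum_distrib_right)
      also have "\<dots> = 0" using hc by simp
      finally have "(\<Sum>j\<in>insert k0 J. c j * (row G j \<bullet> e)) = 0" .
      moreover have "(\<Sum>j\<in>insert k0 J. c j * (row G j \<bullet> e)) = c k0 * (row G k0 \<bullet> e)"
        using finJ k0J eJ by simp
      ultimately have ck0: "c k0 = 0" using k0pos by simp
      have "\<forall>i<m. (\<Sum>j\<in>J. c j * G $$ (j,i)) = 0"
        using hc finJ k0J ck0 by simp
      hence "\<forall>j\<in>J. c j = 0" using J(3) unfolding rindep_def by blast
      thus "\<forall>j\<in>insert k0 J. c j = 0" using ck0 by simp
    qed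
    show "G *\<^sub>v w' \<le> b"
      unfolding feas_iff[OF G b]
    proof (intro allI impI)
      fix k assume kM: "k < M"
      show "row G k \<bullet> w' \<le> b $ k"
      proof (cases "k \<in> K")
        case True
        hence pos: "row G k \<bullet> e > 0" by (simp add: K_def)
        have "t * (row G k \<bullet> e) \<le> ratio k * (row G k \<bullet> e)"
          using tle True pos by (intro mult_right_mono) auto
        also have "\<dots> = b $ k - row G k \<bullet> w" using pos by (simp add: ratio_def)
        finally show ?thesis using dot by simp
      next
        case False
        hence "row G k \<bullet> e \<le> 0" using kM by (auto simp: K_def)
        hence "t * (row G k \<bullet> e) \<le> 0" using t0 by (simp add: mult_nonneg_nonpos)
        thus ?thesis using dot feas kM by (smt (verit))
      qed
    qed
    show "\<forall>j\<in>insert k0 J. row G j \<bullet> w' = b $ j"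
    proof
      fix j assume "j \<in> insert k0 J"
      then show "row G j \<bullet> w' = b $ j"
      proof
        assume "j = k0"
        have "t * (row G k0 \<bullet> e) = b $ k0 - row G k0 \<bullet> w"
          using k0 k0pos by (simp add: ratio_def)
        thus ?thesis using dot \<open>j = k0\<close> by simp
      next
        assume "j \<in> J" thus ?thesis using dot eJ w(3) by simp
      qed
    qed
  qed
qed

lemma vertex_aux:
  assumes G: "G \<in> carrier_mat M m" and inj: "\<forall>v\<in>carrier_vec m. G *\<^sub>v v = 0\<^sub>v M \<longrightarrow> v = 0\<^sub>v m"
    and b: "b \<in> carrier_vec M" and u: "u \<in> carrier_vec m" "G *\<^sub>v u \<le> b"
  shows "r \<le> m \<Longrightarrow> \<exists>J w. J \<subseteq> {..<M} \<and> card J = r \<and> rindep G m J \<and> w \<in> carrier_vec m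
     \<and> G *\<^sub>v w \<le> b \<and> (\<forall>j\<in>J. row G j \<bullet> w = b $ j)"
proof (induction r)
  case 0
  show ?case by (rule exI[of _ "{}"], rule exI[of _ u]) (use u in \<open>auto simp: rindep_def\<close>)
next
  case (Suc r)
  then obtain J w where "J \<subseteq> {..<M}" "card J = r" "rindep G m J" "w \<in> carrier_vec m"
     "G *\<^sub>v w \<le> b" "\<forall>j\<in>J. row G j \<bullet> w = b $ j" by auto
  with step[OF G inj b, of J w] Suc.prems show ?case by auto
qed

lemma indep_det:
  assumes G: "G \<in> carrier_mat M m" and J: "J \<subseteq> {..<M}" "card J = m" "rindep G m J"
  shows "det (submatrix G J {..<m}) \<noteq> 0"
proof
  let ?S = "submatrix G J {..<m}"
  have finJ: "finite J" using J finite_subset by blast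
  have S: "?S \<in> carrier_mat m m" using submatrix_carrier[OF G J(1)] J(2) by simp
  assume "det ?S = 0"
  then have "det (transpose_mat ?S) = 0" using det_transpose[OF S] by simp
  then obtain v where v: "v \<in> carrier_vec m" "v \<noteq> 0\<^sub>v m" "transpose_mat ?S *\<^sub>v v = 0\<^sub>v m"
    using det_0_iff_vec_prod_zero_field[of "transpose_mat ?S" m] S by auto
  define c where "c j = v $ card {x\<in>J. x<j}" for j
  have cp: "\<And>a. a < m \<Longrightarrow> c (pick J a) = v $ a" unfolding c_def using J(2) card_pick by auto
  have "\<forall>i<m. (\<Sum>j\<in>J. c j * G$$(j,i)) = 0"
  proof (intro allI impI)
    fix i assume i: "i < m"
    have "(\<Sum>j\<in>J. c j * G$$(j,i)) = (\<Sum>a<m. c (pick J a) * G$$(pick J a, i))"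
      using sum.reindex_bij_betw[OF bij_pick[OF finJ], of "\<lambda>j. c j * G$$(j,i)"] J(2) by simp
    also have "\<dots> = (\<Sum>a<m. ?S $$ (a,i) * v $ a)"
      using submatrix_entry[OF G J(1)] J(2) i cp by (intro sum.cong) auto
    also have "\<dots> = col ?S i \<bullet> v"
      using S v i unfolding scalar_prod_def by (auto simp: lessThan_atLeast0 intro!: sum.cong)
    also have "\<dots> = (transpose_mat ?S *\<^sub>v v) $ i" using S i by simp
    also have "\<dots> = 0" using v(3) i by simp
    finally show "(\<Sum>j\<in>J. c j * G$$(j,i)) = 0" .
  qed
  hence c0: "\<forall>j\<in>J. c j = 0" using J(3) unfolding rindep_def by blast
  have "v = 0\<^sub>v m"
  proof (rule eq_vecI)
    fix a assume "a < dim_vec (0\<^sub>v m)"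
    hence a: "a < m" by simp
    have "pick J a \<in> J" using a J(2) pick_in_set by auto
    thus "v $ a = 0\<^sub>v m $ a" using cp[OF a] c0 a by simp
  qed (use v in simp)
  thus False using v(2) by simp
qed


lemma rank_inj:
  fixes H :: "real mat"
  assumes H: "H \<in> carrier_mat q m" and r: "vec_space.rank q H = m"
  shows "\<forall>v\<in>carrier_vec m. H *\<^sub>v v = 0\<^sub>v q \<longrightarrow> v = 0\<^sub>v m"
proof (intro ballI impI, rule ccontr)
  fix v :: "real vec" assume v: "v \<in> carrier_vec m" "H *\<^sub>v v = 0\<^sub>v q" "v \<noteq> 0\<^sub>v m"
  interpret V: vec_space "TYPE(real)" q .
  show False
  proof (cases "distinct (cols H)")
    case True
    have "V.lin_indpt (set (cols H))"
      using V.full_rank_lin_indpt[OF H r True] .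
    moreover have "V.lin_dep (set (cols H))"
      using V.lin_depI[OF H v(1) v(3) v(2) True] .
    ultimately show False by blast
  next
    case False
    have li0: "V.lin_indpt {}"
      unfolding V.lin_dep_def by blast
    have "\<exists>A. finite A \<and> maximal A (\<lambda>T. T \<subseteq> set (cols H) \<and> V.lin_indpt T) \<and> {} \<subseteq> A"
      by (rule maximal_exists_superset[of "set (cols H)"]) (use li0 in simp_all)
    then obtain S where S: "finite S" "maximal S (\<lambda>T. T \<subseteq> set (cols H) \<and> V.lin_indpt T)"
      by blast
    have "vec_space.rank q H = card S" using V.rank_card_indpt[OF H S(2)] .
    moreover have "card S \<le> card (set (cols H))"
      using S(2) by (simp add: card_mono maximal_def)
    moreover have "card (set (cols H)) < m"
      using False H card_distinct[of "cols H"] card_length[of "cols H"] by (metis cols_length carrier_matD(2) le_neq_implies_less)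
    ultimately show False using r by simp
  qed
qed

lemma inv_of_det:
  fixes S :: "real mat"
  assumes S: "S \<in> carrier_mat m m" and d: "det S \<noteq> 0"
  shows "\<exists>B. mat_inverse S = Some B \<and> B * S = 1\<^sub>m m \<and> S * B = 1\<^sub>m m \<and> B \<in> carrier_mat m m"
proof (cases "mat_inverse S")
  case None
  then have "S \<notin> Units (ring_mat TYPE(real) m ())" using mat_inverse(1)[OF S, where b="()"] by blast
  moreover have "S \<in> Units (ring_mat TYPE(real) m ())" using det_non_zero_imp_unit[OF S d, where b="()"] by blast
  ultimately show ?thesis by blast
next
  case (Some B)
  then show ?thesis using mat_inverse(2)[OF S Some] by blast
qed

lemma invertible_of_inv:
  fixes S :: "real mat"
  assumes S: "S \<in> carrier_mat m m" and B: "B * S = 1\<^sub>m m" "S * B = 1\<^sub>m m" "B \<in> carrier_mat m m"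
  shows "invertible_mat S"
  using S B unfolding invertible_mat_def inverts_mat_def square_mat.simps by auto

lemma inv_of_invertible:
  fixes S :: "real mat"
  assumes S: "S \<in> carrier_mat m m" and inv: "invertible_mat S"
  shows "\<exists>B. mat_inverse S = Some B \<and> B * S = 1\<^sub>m m \<and> S * B = 1\<^sub>m m \<and> B \<in> carrier_mat m m"
proof (cases "mat_inverse S")
  case None
  then have nU: "S \<notin> Units (ring_mat TYPE(real) m ())" using mat_inverse(1)[OF S, where b="()"] by blast
  obtain B' where B': "S * B' = 1\<^sub>m (dim_row S)" "B' * S = 1\<^sub>m (dim_row B')"
    using inv unfolding invertible_mat_def inverts_mat_def by blast
  have "dim_col (S * B') = dim_col (1\<^sub>m (dim_row S))" using B'(1) by simp
  hence c1: "dim_col B' = m" using S by simp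
  have "dim_col (B' * S) = dim_col (1\<^sub>m (dim_row B'))" using B'(2) by simp
  hence c2: "dim_row B' = m" using S by simp
  have Bc: "B' \<in> carrier_mat m m" using c1 c2 by auto
  have e1: "S * B' = 1\<^sub>m m" "B' * S = 1\<^sub>m m" using B' S c2 by auto
  have "S \<in> Units (ring_mat TYPE(real) m ())"
    unfolding Units_def ring_mat_def using S Bc e1 by force
  with nU show ?thesis by blast
next
  case (Some B)
  then show ?thesis using mat_inverse(2)[OF S Some] by blast
qed

lemma poly_vertex:
  fixes G :: "real mat" and b :: "real vec"
  assumes G: "G \<in> carrier_mat M m" and inj: "\<forall>v\<in>carrier_vec m. G *\<^sub>v v = 0\<^sub>v M \<longrightarrow> v = 0\<^sub>v m"
    and b: "b \<in> carrier_vec M"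
  shows "(\<exists>u\<in>carrier_vec m. G *\<^sub>v u \<le> b) \<longleftrightarrow>
    (\<exists>J. J \<subseteq> {..<M} \<and> dim_row (submatrix G J {..<m}) = m \<and> invertible_mat (submatrix G J {..<m})
       \<and> (\<forall>k\<in>{..<M}-J. (G *\<^sub>v (the (mat_inverse (submatrix G J {..<m})) *\<^sub>v subvec b J)) $ k \<le> b $ k))"
    (is "?L \<longleftrightarrow> ?R")
proof
  assume ?L
  then obtain u where u: "u \<in> carrier_vec m" "G *\<^sub>v u \<le> b" by blast
  obtain J w where Jw: "J \<subseteq> {..<M}" "card J = m" "rindep G m J" "w \<in> carrier_vec m"
     "G *\<^sub>v w \<le> b" "\<forall>j\<in>J. row G j \<bullet> w = b $ j"
    using vertex_aux[OF G inj b u, of m] by blast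
  let ?S = "submatrix G J {..<m}"
  have finJ: "finite J" using Jw(1) finite_subset by blast
  have S: "?S \<in> carrier_mat m m" using submatrix_carrier[OF G Jw(1)] Jw(2) by simp
  obtain B where B: "mat_inverse ?S = Some B" "B * ?S = 1\<^sub>m m" "?S * B = 1\<^sub>m m" "B \<in> carrier_mat m m"
    using inv_of_det[OF S indep_det[OF G Jw(1-3)]] by blast
  have sv: "subvec b J = ?S *\<^sub>v w"
  proof (rule eq_vecI)
    have db: "{i. i < dim_vec b \<and> i \<in> J} = J" using b Jw(1) by auto
    show "dim_vec (subvec b J) = dim_vec (?S *\<^sub>v w)" using S Jw(2) db by (simp add: subvec_def)
    fix a assume "a < dim_vec (?S *\<^sub>v w)"
    hence a: "a < m" using S by simp
    have "(?S *\<^sub>v w) $ a = row ?S a \<bullet> w" using S a by simp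
    also have "\<dots> = (\<Sum>i<m. ?S $$ (a,i) * w $ i)" using row_dot[OF S Jw(4)] .
    also have "\<dots> = (\<Sum>i<m. G $$ (pick J a,i) * w $ i)"
      using submatrix_entry[OF G Jw(1)] a Jw(2) by simp
    also have "\<dots> = row G (pick J a) \<bullet> w" using row_dot[OF G Jw(4)] by simp
    also have "\<dots> = b $ pick J a" using Jw(6) pick_in_set[of a J] a Jw(2) by simp
    also have "\<dots> = subvec b J $ a" using db a Jw(2) by (simp add: subvec_def)
    finally show "subvec b J $ a = (?S *\<^sub>v w) $ a" by simp
  qed
  have wd: "the (mat_inverse ?S) *\<^sub>v subvec b J = w"
    using B sv S Jw(4) by (simp add: assoc_mult_mat_vec[symmetric])
  show ?R
  proof (intro exI[of _ J] conjI)
    show "J \<subseteq> {..<M}" by (rule Jw(1))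
    show "dim_row ?S = m" using S by simp
    show "invertible_mat ?S" using invertible_of_inv[OF S B(2-4)] .
    show "\<forall>k\<in>{..<M}-J. (G *\<^sub>v (the (mat_inverse ?S) *\<^sub>v subvec b J)) $ k \<le> b $ k"
      unfolding wd using feas_iff[OF G b] Jw(5) G by auto
  qed
next
  assume ?R
  then obtain J where J: "J \<subseteq> {..<M}" "dim_row (submatrix G J {..<m}) = m" "invertible_mat (submatrix G J {..<m})"
    "\<forall>k\<in>{..<M}-J. (G *\<^sub>v (the (mat_inverse (submatrix G J {..<m})) *\<^sub>v subvec b J)) $ k \<le> b $ k"
    by blast
  let ?S = "submatrix G J {..<m}"
  have finJ: "finite J" using J(1) finite_subset by blast
  have "dim_row ?S = card J" using submatrix_carrier[OF G J(1)] by (rule carrier_matD)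
  hence cJ: "card J = m" using J(2) by simp
  have S: "?S \<in> carrier_mat m m" using submatrix_carrier[OF G J(1)] cJ by simp
  obtain B where B: "mat_inverse ?S = Some B" "B * ?S = 1\<^sub>m m" "?S * B = 1\<^sub>m m" "B \<in> carrier_mat m m"
    using inv_of_invertible[OF S J(3)] by blast
  define w where "w = B *\<^sub>v subvec b J"
  have db: "{i. i < dim_vec b \<and> i \<in> J} = J" using b J(1) by auto
  have svc: "subvec b J \<in> carrier_vec m" unfolding subvec_def using db cJ by (intro carrier_vecI) simp
  have wc: "w \<in> carrier_vec m" using B(4) svc by (simp add: w_def)
  have Sw: "?S *\<^sub>v w = subvec b J"
    using B svc S by (simp add: w_def assoc_mult_mat_vec[symmetric])
  have act: "row G j \<bullet> w = b $ j" if "j \<in> J" for j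
  proof -
    define a where "a = card {x\<in>J. x<j}"
    have a: "a < m" "pick J a = j" using card_less_in[OF finJ that] pick_card_in_set[OF that] cJ
      by (auto simp: a_def)
    have "row G j \<bullet> w = (\<Sum>i<m. G $$ (pick J a,i) * w $ i)" using row_dot[OF G wc] a by simp
    also have "\<dots> = (\<Sum>i<m. ?S $$ (a,i) * w $ i)"
      using submatrix_entry[OF G J(1)] a cJ by simp
    also have "\<dots> = row ?S a \<bullet> w" using row_dot[OF S wc] by simp
    also have "\<dots> = (?S *\<^sub>v w) $ a" using S a by simp
    also have "\<dots> = b $ j" using Sw a db cJ by (simp add: subvec_def)
    finally show ?thesis .
  qed
  have "G *\<^sub>v w \<le> b"
    unfolding feas_iff[OF G b]
  proof (intro allI impI)
    fix k assume k: "k < M"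
    show "row G k \<bullet> w \<le> b $ k"
    proof (cases "k \<in> J")
      case True thus ?thesis using act by simp
    next
      case False
      hence "(G *\<^sub>v w) $ k \<le> b $ k" using J(4) k B(1) by (simp add: w_def)
      thus ?thesis using G k by simp
    qed
  qed
  thus ?L using wc by blast
qed


lemma per_vertex:
  fixes F H A B :: "real mat" and y :: "real vec" and n m p q :: nat
  assumes F: "F \<in> carrier_mat p n" and H: "H \<in> carrier_mat q m"
    and Hinj: "\<forall>v\<in>carrier_vec m. H *\<^sub>v v = 0\<^sub>v q \<longrightarrow> v = 0\<^sub>v m"
    and A: "A \<in> carrier_mat n n" and B: "B \<in> carrier_mat n m" and y: "y \<in> carrier_vec n"
  shows "(\<exists>u\<in>carrier_vec m. u \<in> unit_polyhedron m H \<and> A *\<^sub>v y + B *\<^sub>v u \<in> unit_polyhedron n F) \<longleftrightarrow>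
     (\<exists>Q P. Q \<subseteq> {..<q} \<and> P \<subseteq> {..<p} \<and>
        (let G = H @\<^sub>r (F * B);
             li = ones_vec q @\<^sub>v (ones_vec p - F *\<^sub>v (A *\<^sub>v y));
             J = Q \<union> (\<lambda>k. q + k) ` P;
             GJ = submatrix G J {..<m};
             w = the (mat_inverse GJ) *\<^sub>v subvec li J
         in dim_row GJ = m \<and> invertible_mat GJ
            \<and> (\<forall>k\<in>{..<q} - Q. row H k \<bullet> w \<le> 1)
            \<and> (\<forall>k\<in>{..<p} - P. row (F * B) k \<bullet> w \<le> 1 - (F *\<^sub>v (A *\<^sub>v y)) $ k)))"
    (is "?LHS \<longleftrightarrow> ?RHS")
proof -
  define G where "G = H @\<^sub>r (F * B)"
  define c where "c = F *\<^sub>v (A *\<^sub>v y)"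
  define li where "li = ones_vec q @\<^sub>v (ones_vec p - c)"
  define wJ where "wJ J = the (mat_inverse (submatrix G J {..<m})) *\<^sub>v subvec li J" for J
  have FB: "F * B \<in> carrier_mat p m" using F B by simp
  have Gc: "G \<in> carrier_mat (q+p) m" using H FB by (simp add: G_def)
  have cc: "c \<in> carrier_vec p" using F A y by (simp add: c_def)
  have onec: "\<And>k. ones_vec k \<in> carrier_vec k" by (simp add: ones_vec_def)
  have lic: "li \<in> carrier_vec (q+p)" unfolding li_def using cc onec by (intro append_carrier_vec) auto
  have Gw: "\<And>w. w \<in> carrier_vec m \<Longrightarrow> G *\<^sub>v w = (H *\<^sub>v w) @\<^sub>v ((F*B) *\<^sub>v w)"
    unfolding G_def using mat_mult_append[OF H FB] by blast
  have Gk: "\<And>w k. w \<in> carrier_vec m \<Longrightarrow> k < q+p \<Longrightarrow>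
      (G *\<^sub>v w) $ k = (if k < q then row H k \<bullet> w else row (F*B) (k-q) \<bullet> w)"
  proof -
    fix w :: "real vec" and k :: nat assume w: "w \<in> carrier_vec m" and k: "k < q+p"
    have d1: "dim_vec (H *\<^sub>v w) = q" "dim_vec ((F*B) *\<^sub>v w) = p" using H FB by auto
    have "(G *\<^sub>v w) $ k = ((H *\<^sub>v w) @\<^sub>v ((F*B) *\<^sub>v w)) $ k" using Gw[OF w] by simp
    also have "\<dots> = (if k < q then (H *\<^sub>v w) $ k else ((F*B) *\<^sub>v w) $ (k - q))"
      using index_append_vec(1)[of k "H *\<^sub>v w" "(F*B) *\<^sub>v w"] d1 k by simp
    also have "\<dots> = (if k < q then row H k \<bullet> w else row (F*B) (k-q) \<bullet> w)"
      using H FB k by auto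
    finally show "(G *\<^sub>v w) $ k = (if k < q then row H k \<bullet> w else row (F*B) (k-q) \<bullet> w)" .
  qed
  have lik: "\<And>k. k < q+p \<Longrightarrow> li $ k = (if k < q then 1 else 1 - c $ (k-q))"
    unfolding li_def using cc by (simp add: ones_vec_def)
  have Ginj: "\<forall>v\<in>carrier_vec m. G *\<^sub>v v = 0\<^sub>v (q+p) \<longrightarrow> v = 0\<^sub>v m"
  proof (intro ballI impI)
    fix v assume v: "v \<in> carrier_vec m" "G *\<^sub>v v = 0\<^sub>v (q+p)"
    have "H *\<^sub>v v = 0\<^sub>v q"
    proof (rule eq_vecI)
      fix k assume "k < dim_vec (0\<^sub>v q)"
      hence k: "k<q" by simp
      have "(G *\<^sub>v v) $ k = 0" using v(2) k by simp
      thus "(H *\<^sub>v v) $ k = 0\<^sub>v q $ k" using Gk[OF v(1), of k] k H by simp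
    qed (use H in simp)
    thus "v = 0\<^sub>v m" using Hinj v(1) by blast
  qed
  have split: "(\<forall>k<q+p. (G *\<^sub>v u)$k \<le> li $ k) \<longleftrightarrow>
      (\<forall>k<q. row H k \<bullet> u \<le> 1) \<and> (\<forall>k<p. row (F*B) k \<bullet> u \<le> 1 - c $ k)"
    if u: "u \<in> carrier_vec m" for u
  proof
    assume a: "\<forall>k<q+p. (G *\<^sub>v u)$k \<le> li $ k"
    show "(\<forall>k<q. row H k \<bullet> u \<le> 1) \<and> (\<forall>k<p. row (F*B) k \<bullet> u \<le> 1 - c $ k)"
    proof (intro conjI allI impI)
      fix k assume k: "k < q"
      thus "row H k \<bullet> u \<le> 1" using a[rule_format, of k] Gk[OF u, of k] lik[of k] by simp
    next
      fix k assume k: "k < p"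
      thus "row (F*B) k \<bullet> u \<le> 1 - c $ k" using a[rule_format, of "q+k"] Gk[OF u, of "q+k"] lik[of "q+k"] by simp
    qed
  next
    assume a: "(\<forall>k<q. row H k \<bullet> u \<le> 1) \<and> (\<forall>k<p. row (F*B) k \<bullet> u \<le> 1 - c $ k)"
    show "\<forall>k<q+p. (G *\<^sub>v u)$k \<le> li $ k"
    proof (intro allI impI)
      fix k assume k: "k < q+p"
      show "(G *\<^sub>v u)$k \<le> li $ k"
      proof (cases "k < q")
        case True thus ?thesis using a Gk[OF u k] lik[OF k] by simp
      next
        case False
        hence "k - q < p" using k by simp
        thus ?thesis using a False Gk[OF u k] lik[OF k] by simp
      qed
    qed
  qed
  have L: "?LHS \<longleftrightarrow> (\<exists>u\<in>carrier_vec m. G *\<^sub>v u \<le> li)"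
  proof -
    have "u \<in> unit_polyhedron m H \<and> A *\<^sub>v y + B *\<^sub>v u \<in> unit_polyhedron n F \<longleftrightarrow> G *\<^sub>v u \<le> li"
      if u: "u \<in> carrier_vec m" for u
    proof -
      have e: "F *\<^sub>v (A *\<^sub>v y + B *\<^sub>v u) = c + (F*B) *\<^sub>v u"
        using F A B y u by (simp add: c_def mult_add_distrib_mat_vec[of F p n])
      have 1: "u \<in> unit_polyhedron m H \<longleftrightarrow> (\<forall>k<q. row H k \<bullet> u \<le> 1)"
        unfolding unit_polyhedron_def less_eq_vec_def using u H by (auto simp: ones_vec_def)
      have 2: "A *\<^sub>v y + B *\<^sub>v u \<in> unit_polyhedron n F \<longleftrightarrow> (\<forall>k<p. row (F*B) k \<bullet> u \<le> 1 - c $ k)"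
      proof -
        have "A *\<^sub>v y + B *\<^sub>v u \<in> carrier_vec n" using A B y u by simp
        moreover have "\<And>k. k < p \<Longrightarrow> (F *\<^sub>v (A *\<^sub>v y + B *\<^sub>v u)) $ k = c $ k + row (F*B) k \<bullet> u"
          unfolding e using cc FB u by (subst index_add_vec) auto
        ultimately show ?thesis
          unfolding unit_polyhedron_def less_eq_vec_def using F by (auto simp: ones_vec_def algebra_simps)
      qed
      have 3: "G *\<^sub>v u \<le> li \<longleftrightarrow> (\<forall>k<q+p. (G *\<^sub>v u)$k \<le> li $ k)"
        unfolding less_eq_vec_def using Gc lic by auto
      show ?thesis using 1 2 3 split[OF u] by blast
    qed
    thus ?thesis by blast
  qed
  have wc: "wJ J \<in> carrier_vec m"
    if J: "J \<subseteq> {..<q+p}" "dim_row (submatrix G J {..<m}) = m" "invertible_mat (submatrix G J {..<m})" for J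
  proof -
    have "dim_row (submatrix G J {..<m}) = card J" using submatrix_carrier[OF Gc J(1)] by (rule carrier_matD)
    hence "card J = m" using J(2) by simp
    hence S: "submatrix G J {..<m} \<in> carrier_mat m m" using submatrix_carrier[OF Gc J(1)] by simp
    obtain Bi where "mat_inverse (submatrix G J {..<m}) = Some Bi" "Bi \<in> carrier_mat m m"
      using inv_of_invertible[OF S J(3)] by blast
    thus ?thesis unfolding wJ_def by (intro carrier_vecI) (auto dest: carrier_matD)
  qed
  have R1: "?RHS \<longleftrightarrow> (\<exists>Q P. Q \<subseteq> {..<q} \<and> P \<subseteq> {..<p} \<and>
      dim_row (submatrix G (Q \<union> (\<lambda>k. q + k) ` P) {..<m}) = m \<and> invertible_mat (submatrix G (Q \<union> (\<lambda>k. q + k) ` P) {..<m})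
      \<and> (\<forall>k\<in>{..<q} - Q. row H k \<bullet> wJ (Q \<union> (\<lambda>k. q + k) ` P) \<le> 1)
      \<and> (\<forall>k\<in>{..<p} - P. row (F * B) k \<bullet> wJ (Q \<union> (\<lambda>k. q + k) ` P) \<le> 1 - c $ k))"
    by (simp only: Let_def G_def[symmetric] c_def[symmetric] li_def[symmetric] wJ_def[symmetric])
  have R2: "(\<exists>J. J \<subseteq> {..<q+p} \<and> dim_row (submatrix G J {..<m}) = m \<and> invertible_mat (submatrix G J {..<m})
       \<and> (\<forall>k\<in>{..<q+p}-J. (G *\<^sub>v wJ J) $ k \<le> li $ k)) \<longleftrightarrow>
     (\<exists>Q P. Q \<subseteq> {..<q} \<and> P \<subseteq> {..<p} \<and>
      dim_row (submatrix G (Q \<union> (\<lambda>k. q + k) ` P) {..<m}) = m \<and> invertible_mat (submatrix G (Q \<union> (\<lambda>k. q + k) ` P) {..<m})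
      \<and> (\<forall>k\<in>{..<q} - Q. row H k \<bullet> wJ (Q \<union> (\<lambda>k. q + k) ` P) \<le> 1)
      \<and> (\<forall>k\<in>{..<p} - P. row (F * B) k \<bullet> wJ (Q \<union> (\<lambda>k. q + k) ` P) \<le> 1 - c $ k))"
  proof
    assume "\<exists>J. J \<subseteq> {..<q+p} \<and> dim_row (submatrix G J {..<m}) = m \<and> invertible_mat (submatrix G J {..<m})
       \<and> (\<forall>k\<in>{..<q+p}-J. (G *\<^sub>v wJ J) $ k \<le> li $ k)"
    then obtain J where J: "J \<subseteq> {..<q+p}" "dim_row (submatrix G J {..<m}) = m" "invertible_mat (submatrix G J {..<m})"
       "\<forall>k\<in>{..<q+p}-J. (G *\<^sub>v wJ J) $ k \<le> li $ k" by blast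
    define Q where "Q = {k\<in>J. k < q}"
    define P where "P = {k. q + k \<in> J}"
    have Jeq: "Q \<union> (\<lambda>k. q + k) ` P = J"
    proof
      show "Q \<union> (\<lambda>k. q + k) ` P \<subseteq> J" by (auto simp: Q_def P_def)
      show "J \<subseteq> Q \<union> (\<lambda>k. q + k) ` P"
      proof
        fix j assume j: "j \<in> J"
        show "j \<in> Q \<union> (\<lambda>k. q + k) ` P"
        proof (cases "j < q")
          case True thus ?thesis using j by (simp add: Q_def)
        next
          case False
          hence "j = q + (j - q)" by simp
          moreover have "j - q \<in> P" using j False by (simp add: P_def)
          ultimately show ?thesis by blast
        qed
      qed
    qed
    have Qs: "Q \<subseteq> {..<q}" by (auto simp: Q_def)
    have Ps: "P \<subseteq> {..<p}" using J(1) by (auto simp: P_def)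
    have w: "wJ J \<in> carrier_vec m" using wc[OF J(1-3)] .
    show "\<exists>Q P. Q \<subseteq> {..<q} \<and> P \<subseteq> {..<p} \<and>
      dim_row (submatrix G (Q \<union> (\<lambda>k. q + k) ` P) {..<m}) = m \<and> invertible_mat (submatrix G (Q \<union> (\<lambda>k. q + k) ` P) {..<m})
      \<and> (\<forall>k\<in>{..<q} - Q. row H k \<bullet> wJ (Q \<union> (\<lambda>k. q + k) ` P) \<le> 1)
      \<and> (\<forall>k\<in>{..<p} - P. row (F * B) k \<bullet> wJ (Q \<union> (\<lambda>k. q + k) ` P) \<le> 1 - c $ k)"
    proof (intro exI conjI)
      show "Q \<subseteq> {..<q}" by (rule Qs)
      show "P \<subseteq> {..<p}" by (rule Ps)
      show "dim_row (submatrix G (Q \<union> (\<lambda>k. q + k) ` P) {..<m}) = m" unfolding Jeq by (rule J(2))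
      show "invertible_mat (submatrix G (Q \<union> (\<lambda>k. q + k) ` P) {..<m})" unfolding Jeq by (rule J(3))
      show "\<forall>k\<in>{..<q} - Q. row H k \<bullet> wJ (Q \<union> (\<lambda>k. q + k) ` P) \<le> 1"
      proof
        fix k assume k: "k \<in> {..<q} - Q"
        hence kk: "k < q" "k \<notin> J" "k < q + p" by (auto simp: Q_def)
        have "(G *\<^sub>v wJ J) $ k \<le> li $ k" using J(4) kk by simp
        thus "row H k \<bullet> wJ (Q \<union> (\<lambda>k. q + k) ` P) \<le> 1" unfolding Jeq using Gk[OF w kk(3)] lik[OF kk(3)] kk by simp
      qed
      show "\<forall>k\<in>{..<p} - P. row (F * B) k \<bullet> wJ (Q \<union> (\<lambda>k. q + k) ` P) \<le> 1 - c $ k"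
      proof
        fix k assume k: "k \<in> {..<p} - P"
        hence kk: "q + k \<notin> J" "q + k < q + p" by (auto simp: P_def)
        have "(G *\<^sub>v wJ J) $ (q+k) \<le> li $ (q+k)" using J(4) kk by simp
        thus "row (F * B) k \<bullet> wJ (Q \<union> (\<lambda>k. q + k) ` P) \<le> 1 - c $ k" unfolding Jeq using Gk[OF w kk(2)] lik[OF kk(2)] by simp
      qed
    qed
  next
    assume "\<exists>Q P. Q \<subseteq> {..<q} \<and> P \<subseteq> {..<p} \<and>
      dim_row (submatrix G (Q \<union> (\<lambda>k. q + k) ` P) {..<m}) = m \<and> invertible_mat (submatrix G (Q \<union> (\<lambda>k. q + k) ` P) {..<m})
      \<and> (\<forall>k\<in>{..<q} - Q. row H k \<bullet> wJ (Q \<union> (\<lambda>k. q + k) ` P) \<le> 1)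
      \<and> (\<forall>k\<in>{..<p} - P. row (F * B) k \<bullet> wJ (Q \<union> (\<lambda>k. q + k) ` P) \<le> 1 - c $ k)"
    then obtain Q P where QP: "Q \<subseteq> {..<q}" "P \<subseteq> {..<p}"
      "dim_row (submatrix G (Q \<union> (\<lambda>k. q + k) ` P) {..<m}) = m" "invertible_mat (submatrix G (Q \<union> (\<lambda>k. q + k) ` P) {..<m})"
      "\<forall>k\<in>{..<q} - Q. row H k \<bullet> wJ (Q \<union> (\<lambda>k. q + k) ` P) \<le> 1"
      "\<forall>k\<in>{..<p} - P. row (F * B) k \<bullet> wJ (Q \<union> (\<lambda>k. q + k) ` P) \<le> 1 - c $ k" by blast
    define J where "J = Q \<union> (\<lambda>k. q + k) ` P"
    have Js: "J \<subseteq> {..<q+p}" using QP(1,2) by (auto simp: J_def)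
    have w: "wJ J \<in> carrier_vec m" using wc[OF Js] QP(3,4) by (simp add: J_def)
    show "\<exists>J. J \<subseteq> {..<q+p} \<and> dim_row (submatrix G J {..<m}) = m \<and> invertible_mat (submatrix G J {..<m})
       \<and> (\<forall>k\<in>{..<q+p}-J. (G *\<^sub>v wJ J) $ k \<le> li $ k)"
    proof (intro exI conjI)
      show "J \<subseteq> {..<q+p}" by (rule Js)
      show "dim_row (submatrix G J {..<m}) = m" using QP(3) by (simp add: J_def)
      show "invertible_mat (submatrix G J {..<m})" using QP(4) by (simp add: J_def)
      show "\<forall>k\<in>{..<q+p}-J. (G *\<^sub>v wJ J) $ k \<le> li $ k"
      proof
        fix k assume k: "k \<in> {..<q+p} - J"
        hence kk: "k < q + p" "k \<notin> J" by auto
        show "(G *\<^sub>v wJ J) $ k \<le> li $ k"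
        proof (cases "k < q")
          case True
          hence "k \<in> {..<q} - Q" using kk by (auto simp: J_def)
          hence "row H k \<bullet> wJ J \<le> 1" using QP(5) by (simp add: J_def)
          thus ?thesis using Gk[OF w kk(1)] lik[OF kk(1)] True by simp
        next
          case False
          hence "k = q + (k - q)" by simp
          hence "k - q \<notin> P" using kk(2) unfolding J_def by (metis UnI2 image_eqI)
          moreover have "k - q < p" using kk(1) False by simp
          ultimately have "row (F * B) (k - q) \<bullet> wJ J \<le> 1 - c $ (k - q)" using QP(6) by (simp add: J_def)
          thus ?thesis using Gk[OF w kk(1)] lik[OF kk(1)] False by simp
        qed
      qed
    qed
  qed
  have PV: "(\<exists>u\<in>carrier_vec m. G *\<^sub>v u \<le> li) \<longleftrightarrow>
    (\<exists>J. J \<subseteq> {..<q+p} \<and> dim_row (submatrix G J {..<m}) = m \<and> invertible_mat (submatrix G J {..<m})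
       \<and> (\<forall>k\<in>{..<q+p}-J. (G *\<^sub>v wJ J) $ k \<le> li $ k))"
    unfolding wJ_def by (rule poly_vertex[OF Gc Ginj lic])
  show ?thesis by (simp only: L PV R2 R1)
qed

theorem lemma2:
  fixes n m l N p q :: nat
    and F :: "real mat" and H :: "real mat"
    and x :: "nat \<Rightarrow> real vec"
    and \<delta> :: "real vec" and A B :: "real mat"
  assumes "n \<ge> m"
    and F: "F \<in> carrier_mat p n" and F_rank: "vec_space.rank p F = n"
    and S: "C_polytope n (unit_polyhedron n F)"
    and verts: "{x i | i. i < N} = {v. is_vertex (unit_polyhedron n F) v}"
    and inj: "inj_on x {..<N}"
    and H: "H \<in> carrier_mat q m" and H_rank: "vec_space.rank q H = m"
    and U: "C_polytope m (unit_polyhedron m H)"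
    and \<delta>: "\<delta> \<in> carrier_vec l"
    and A: "A \<in> carrier_mat n n" and B: "B \<in> carrier_mat n m"
  shows "(\<exists>C d. \<forall>i<N. C i \<in> carrier_mat m l \<and> d i \<in> carrier_vec m
            \<and> C i *\<^sub>v \<delta> + d i \<in> unit_polyhedron m H
            \<and> A *\<^sub>v x i + B *\<^sub>v (C i *\<^sub>v \<delta> + d i) \<in> unit_polyhedron n F)
     \<longleftrightarrow>
     (\<forall>i<N. \<exists>Q P. Q \<subseteq> {..<q} \<and> P \<subseteq> {..<p} \<and>
        (let G = H @\<^sub>r (F * B);
             li = ones_vec q @\<^sub>v (ones_vec p - F *\<^sub>v (A *\<^sub>v x i));
             J = Q \<union> (\<lambda>k. q + k) ` P;
             GJ = submatrix G J {..<m};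
             w = the (mat_inverse GJ) *\<^sub>v subvec li J
         in dim_row GJ = m \<and> invertible_mat GJ
            \<and> (\<forall>k\<in>{..<q} - Q. row H k \<bullet> w \<le> 1)
            \<and> (\<forall>k\<in>{..<p} - P. row (F * B) k \<bullet> w \<le> 1 - (F *\<^sub>v (A *\<^sub>v x i)) $ k)))"
proof -
  have Hinj: "\<forall>v\<in>carrier_vec m. H *\<^sub>v v = 0\<^sub>v q \<longrightarrow> v = 0\<^sub>v m" by (rule rank_inj[OF H H_rank])
  have xc: "x i \<in> carrier_vec n" if i: "i < N" for i
  proof -
    have "x i \<in> {x i | i. i < N}" using i by blast
    hence "is_vertex (unit_polyhedron n F) (x i)" using verts by simp
    thus ?thesis unfolding is_vertex_def unit_polyhedron_def by blast
  qed
  note PV = per_vertex[OF F H Hinj A B xc]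
  show ?thesis
  proof
    assume "\<exists>C d. \<forall>i<N. C i \<in> carrier_mat m l \<and> d i \<in> carrier_vec m
            \<and> C i *\<^sub>v \<delta> + d i \<in> unit_polyhedron m H
            \<and> A *\<^sub>v x i + B *\<^sub>v (C i *\<^sub>v \<delta> + d i) \<in> unit_polyhedron n F"
    then obtain C d where Cd: "\<forall>i<N. C i \<in> carrier_mat m l \<and> d i \<in> carrier_vec m
            \<and> C i *\<^sub>v \<delta> + d i \<in> unit_polyhedron m H
            \<and> A *\<^sub>v x i + B *\<^sub>v (C i *\<^sub>v \<delta> + d i) \<in> unit_polyhedron n F" by blast
    show "\<forall>i<N. \<exists>Q P. Q \<subseteq> {..<q} \<and> P \<subseteq> {..<p} \<and>
        (let G = H @\<^sub>r (F * B);
             li = ones_vec q @\<^sub>v (ones_vec p - F *\<^sub>v (A *\<^sub>v x i));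
             J = Q \<union> (\<lambda>k. q + k) ` P;
             GJ = submatrix G J {..<m};
             w = the (mat_inverse GJ) *\<^sub>v subvec li J
         in dim_row GJ = m \<and> invertible_mat GJ
            \<and> (\<forall>k\<in>{..<q} - Q. row H k \<bullet> w \<le> 1)
            \<and> (\<forall>k\<in>{..<p} - P. row (F * B) k \<bullet> w \<le> 1 - (F *\<^sub>v (A *\<^sub>v x i)) $ k))"
    proof (intro allI impI)
      fix i assume i: "i < N"
      have "C i *\<^sub>v \<delta> + d i \<in> carrier_vec m" using Cd i \<delta> by auto
      hence ex: "\<exists>u\<in>carrier_vec m. u \<in> unit_polyhedron m H \<and> A *\<^sub>v x i + B *\<^sub>v u \<in> unit_polyhedron n F"
        using Cd i by blast
      show "\<exists>Q P. Q \<subseteq> {..<q} \<and> P \<subseteq> {..<p} \<and>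
        (let G = H @\<^sub>r (F * B);
             li = ones_vec q @\<^sub>v (ones_vec p - F *\<^sub>v (A *\<^sub>v x i));
             J = Q \<union> (\<lambda>k. q + k) ` P;
             GJ = submatrix G J {..<m};
             w = the (mat_inverse GJ) *\<^sub>v subvec li J
         in dim_row GJ = m \<and> invertible_mat GJ
            \<and> (\<forall>k\<in>{..<q} - Q. row H k \<bullet> w \<le> 1)
            \<and> (\<forall>k\<in>{..<p} - P. row (F * B) k \<bullet> w \<le> 1 - (F *\<^sub>v (A *\<^sub>v x i)) $ k))"
        by (rule iffD1[OF PV[OF i] ex])
    qed
  next
    assume R: "\<forall>i<N. \<exists>Q P. Q \<subseteq> {..<q} \<and> P \<subseteq> {..<p} \<and>
        (let G = H @\<^sub>r (F * B);
             li = ones_vec q @\<^sub>v (ones_vec p - F *\<^sub>v (A *\<^sub>v x i));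
             J = Q \<union> (\<lambda>k. q + k) ` P;
             GJ = submatrix G J {..<m};
             w = the (mat_inverse GJ) *\<^sub>v subvec li J
         in dim_row GJ = m \<and> invertible_mat GJ
            \<and> (\<forall>k\<in>{..<q} - Q. row H k \<bullet> w \<le> 1)
            \<and> (\<forall>k\<in>{..<p} - P. row (F * B) k \<bullet> w \<le> 1 - (F *\<^sub>v (A *\<^sub>v x i)) $ k))"
    have "\<forall>i. \<exists>u. i < N \<longrightarrow> u \<in> carrier_vec m \<and> u \<in> unit_polyhedron m H \<and> A *\<^sub>v x i + B *\<^sub>v u \<in> unit_polyhedron n F"
    proof
      fix i
      show "\<exists>u. i < N \<longrightarrow> u \<in> carrier_vec m \<and> u \<in> unit_polyhedron m H \<and> A *\<^sub>v x i + B *\<^sub>v u \<in> unit_polyhedron n F"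
      proof (cases "i < N")
        case True
        have "\<exists>u\<in>carrier_vec m. u \<in> unit_polyhedron m H \<and> A *\<^sub>v x i + B *\<^sub>v u \<in> unit_polyhedron n F"
          by (rule iffD2[OF PV[OF True] R[rule_format, OF True]])
        thus ?thesis by blast
      qed simp
    qed
    from choice[OF this] obtain f where f: "\<forall>i. i < N \<longrightarrow> f i \<in> carrier_vec m \<and> f i \<in> unit_polyhedron m H \<and> A *\<^sub>v x i + B *\<^sub>v f i \<in> unit_polyhedron n F"
      ..
    have z: "0\<^sub>m m l *\<^sub>v \<delta> = 0\<^sub>v m" using \<delta> by (intro eq_vecI) auto
    have zf: "0\<^sub>m m l *\<^sub>v \<delta> + f i = f i" if "i < N" for i
    proof -
      have "f i \<in> carrier_vec m" using f that by blast
      thus ?thesis unfolding z by (rule left_zero_vec)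
    qed
    show "\<exists>C d. \<forall>i<N. C i \<in> carrier_mat m l \<and> d i \<in> carrier_vec m
            \<and> C i *\<^sub>v \<delta> + d i \<in> unit_polyhedron m H
            \<and> A *\<^sub>v x i + B *\<^sub>v (C i *\<^sub>v \<delta> + d i) \<in> unit_polyhedron n F"
    proof (rule exI[of _ "\<lambda>_. 0\<^sub>m m l"], rule exI[of _ f], intro allI impI conjI)
      fix i assume i: "i < N"
      show "0\<^sub>m m l \<in> carrier_mat m l" by simp
      show "f i \<in> carrier_vec m" using f i by blast
      show "0\<^sub>m m l *\<^sub>v \<delta> + f i \<in> unit_polyhedron m H" unfolding zf[OF i] using f i by blast
      show "A *\<^sub>v x i + B *\<^sub>v (0\<^sub>m m l *\<^sub>v \<delta> + f i) \<in> unit_polyhedron n F" unfolding zf[OF i] using f i by blast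
    qed
  qed
qed

end
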